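(* Let $W,V$ be subspaces of $\mathbb{C}^n$ with $\mathbb{C}^n=W\oplus V^\perp$, let $\{\mathbf{w}_i\}_{i=1}^N$ be a frame for $W$ and let $\{\mathbf{v}_i\}_{i=1}^N$ be an oblique dual frame of $\{\mathbf{w}_i\}_{i=1}^N$ on $V$. Then $$\sum_{i=1}^N|\langle\mathbf{w}_i,\mathbf{v}_i\rangle|^2\ge\frac{d_W^2}{N},$$ where $d_W=\dim W$. Furthermore, equality holds if and only if $\langle\mathbf{w}_i,\mathbf{v}_i\rangle=\frac{d_W}{N}$ for each $i$.
   Context: The inner product on $\mathbb{C}^n$ is $\langle\mathbf{x},\mathbf{y}\rangle=\mathbf{y}^*\mathbf{x}$ (linear in the first argument). $V^\perp$ is the orthogonal complement of $V$. When $\mathbb{C}^n=W\oplus V^\perp$, $\boldsymbol{\pi}_{WV^\perp}$ denotes the oblique projection onto $W$ along $V^\perp$ (identity on $W$, zero on $V^\perp$). A finite family $\{\mathbf{w}_i\}_{i=1}^N\subset W$ is a frame for $W$ if there are $0<A\le B$ with $A\|\mathbf{f}\|^2\le\sum_i|\langle\mathbf{w}_i,\mathbf{f}\rangle|^2\le B\|\mathbf{f}\|^2$ for all $\mathbf{f}\in W$ (equivalently, it spans $W$). A frame $\{\mathbf{v}_i\}_{i=1}^N$ for $V$ (with $\mathbf{v}_i\in V$) is an oblique dual frame of $\{\mathbf{w}_i\}_{i=1}^N$ on $V$ if $\boldsymbol{\pi}_{WV^\perp}\mathbf{f}=\sum_{i=1}^N\langle\mathbf{f},\mathbf{v}_i\rangle\mathbf{w}_i$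 for all $\mathbf{f}\in\mathbb{C}^n$. *)

theory Defs
  imports "HOL-Analysis.Analysis"
begin

text \<open>Complex-linear structure: scalar multiplication (*s); vec.subspace, vec.dim, vec.span
  are the complex-linear notions from Cartesian_Space.\<close>

definition cinner :: "complex ^ 'n \<Rightarrow> complex ^ 'n \<Rightarrow> complex" where
  "cinner x y = (\<Sum>j\<in>UNIV. x $ j * cnj (y $ j))"

definition orth_compl :: "(complex ^ 'n) set \<Rightarrow> (complex ^ 'n) set" where
  "orth_compl V = {x. \<forall>v\<in>V. cinner x v = 0}"

definition direct_sum_UNIV :: "(complex ^ 'n) set \<Rightarrow> (complex ^ 'n) set \<Rightarrow> bool" where
  "direct_sum_UNIV W U \<longleftrightarrow> W \<inter> U = {0} \<and> (\<forall>f. \<exists>w\<in>W. \<exists>u\<in>U. f = w + u)"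

text \<open>Oblique projection onto W along U (meaningful when C^n = W (+) U).\<close>
definition oblique_proj :: "(complex ^ 'n) set \<Rightarrow> (complex ^ 'n) set \<Rightarrow> complex ^ 'n \<Rightarrow> complex ^ 'n" where
  "oblique_proj W U f = (THE w. w \<in> W \<and> f - w \<in> U)"

definition is_frame :: "(complex ^ 'n) set \<Rightarrow> (nat \<Rightarrow> complex ^ 'n) \<Rightarrow> nat \<Rightarrow> bool" where
  "is_frame W w N \<longleftrightarrow> (\<forall>i\<in>{1..N}. w i \<in> W) \<and>
     (\<exists>A B. 0 < A \<and> A \<le> B \<and> (\<forall>f\<in>W.
        A * (norm f)\<^sup>2 \<le> (\<Sum>i=1..N. (cmod (cinner (w i) f))\<^sup>2) \<and>
        (\<Sum>i=1..N. (cmod (cinner (w i) f))\<^sup>2) \<le> B * (norm f)\<^sup>2))"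

definition oblique_dual_frame ::
  "(complex ^ 'n) set \<Rightarrow> (complex ^ 'n) set \<Rightarrow> (nat \<Rightarrow> complex ^ 'n) \<Rightarrow> (nat \<Rightarrow> complex ^ 'n) \<Rightarrow> nat \<Rightarrow> bool" where
  "oblique_dual_frame W V w v N \<longleftrightarrow> is_frame V v N \<and>
     (\<forall>f. oblique_proj W (orth_compl V) f = (\<Sum>i=1..N. cinner f (v i) *s w i))"

end

theory Submission
  imports Defs
begin

lemma cmod_diff_real_sq:
  fixes z :: complex and c :: real
  shows "(cmod (z - complex_of_real c))\<^sup>2 = (cmod z)\<^sup>2 - 2 * c * Re z + c\<^sup>2"
  by (simp add: cmod_power2 power2_diff algebra_simps)

lemma cinner_axis: "cinner (axis j 1) y = cnj (y $ j)"
proof -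
  have "cinner (axis j 1) y = (\<Sum>k\<in>UNIV. (if k = j then cnj (y $ k) else 0))"
    unfolding cinner_def axis_def by (intro sum.cong) auto
  then show ?thesis by simp
qed

lemma trace_swap: "(\<Sum>j\<in>UNIV. (\<Sum>i=1..N. cinner (axis j 1) (v i) *s (w::nat\<Rightarrow>complex^'n) i) $ j) = (\<Sum>i=1..N. cinner (w i) (v i))"
  unfolding cinner_axis sum_component
  apply simp
  apply (subst sum.swap) apply (simp add: mult.commute cinner_def)
  done

lemma final_alg:
  fixes d c :: real and z :: "nat \<Rightarrow> complex"
  assumes "N \<noteq> 0" "Re (\<Sum>i=1..N. z i) = d" "c = d / real N"
  shows "(\<Sum>i=1..N. (cmod (z i))\<^sup>2) - 2 * c * Re (\<Sum>i=1..N. z i) + real N * c\<^sup>2 = (\<Sum>i=1..N. (cmod (z i))\<^sup>2) - d\<^sup>2 / real N"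
proof -
  have dd: "d = c * real N" using assms by simp
  show ?thesis unfolding assms(2) unfolding dd using assms(1) by (simp add: power2_eq_square)
qed

lemma trace_eq:
  fixes W :: "(complex ^ 'n) set" and w v :: "nat \<Rightarrow> complex ^ 'n" and N :: nat
  assumes sW: "vec.subspace W"
    and wW: "\<And>i. i \<in> {1..N} \<Longrightarrow> w i \<in> W"
    and id: "\<And>x. x \<in> W \<Longrightarrow> (\<Sum>i=1..N. cinner x (v i) *s w i) = x"
  shows "(\<Sum>i=1..N. cinner (w i) (v i)) = of_nat (vec.dim W)"
proof -
  define P where "P f = (\<Sum>i=1..N. cinner f (v i) *s w i)" for f :: "complex ^ 'n"
  define T where "T = (\<Sum>j\<in>UNIV. P (axis j 1) $ j)"
  have PW: "P f \<in> W" for f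
    unfolding P_def using sW wW by (intro vec.subspace_sum) (auto intro: vec.subspace_scale)
  have "(\<Sum>i=1..N. cinner (w i) (v i)) = T"
    unfolding T_def P_def by (rule trace_swap[symmetric])
  also have "T = of_nat (vec.dim W)"
  proof -
    obtain B where B: "B \<subseteq> W" "vec.independent B" "W \<subseteq> vec.span B" "card B = vec.dim W"
      using vec.basis_exists by blast
    have fB: "finite B" using B(2) vec.finiteI_independent by blast
    define R where "R = vec.representation B"
    have Pspan: "P f \<in> vec.span B" for f using PW B(3) by blast
    have comp: "P f $ j = (\<Sum>b\<in>B. R (P f) b * b $ j)" for f j
    proof -
      have "P f = (\<Sum>b\<in>B. R (P f) b *s b)"
        unfolding R_def using vec.sum_representation_eq[OF B(2) Pspan fB] by simp
      from arg_cong[OF this, of "\<lambda>x. x $ j"] show ?thesis by (simp add: sum_component)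
    qed
    have lin: "(\<Sum>j\<in>UNIV. b $ j *s P (axis j 1)) = P b" for b :: "complex ^ 'n"
    proof -
      have "(\<Sum>j\<in>UNIV. b $ j *s P (axis j 1)) = (\<Sum>i=1..N. (\<Sum>j\<in>UNIV. b $ j * cinner (axis j 1) (v i)) *s w i)"
        unfolding P_def apply (simp add: vec.scale_sum_right vec.scale_sum_left) apply (subst sum.swap) apply simp done
      also have "\<dots> = P b"
        unfolding P_def cinner_axis by (simp add: cinner_def)
      finally show ?thesis .
    qed
    have "T = (\<Sum>b\<in>B. \<Sum>j\<in>UNIV. b $ j * R (P (axis j 1)) b)"
      unfolding T_def comp by (subst sum.swap) (simp add: mult.commute)
    also have "\<dots> = (\<Sum>b\<in>B. R (\<Sum>j\<in>UNIV. b $ j *s P (axis j 1)) b)"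
      unfolding R_def
      by (simp add: vec.representation_sum[OF B(2)] vec.representation_scale[OF B(2) Pspan] vec.span_scale Pspan)
    also have "\<dots> = (\<Sum>b\<in>B. R b b)"
    proof (intro sum.cong refl)
      fix b assume "b \<in> B"
      then have "P b = b" unfolding P_def using id B(1) by blast
      then show "R (\<Sum>j\<in>UNIV. b $ j *s P (axis j 1)) b = R b b" by (simp only: lin)
    qed
    also have "\<dots> = (\<Sum>b\<in>B. 1)"
      unfolding R_def by (intro sum.cong refl) (simp add: vec.representation_basis[OF B(2)])
    finally show ?thesis using B(4) by simp
  qed
  finally show ?thesis .
qed

theorem lemma3p2:
  fixes W V :: "(complex ^ 'n) set" and w v :: "nat \<Rightarrow> complex ^ 'n" and N :: nat
  assumes "vec.subspace W" and "vec.subspace V"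
    and "direct_sum_UNIV W (orth_compl V)"
    and "is_frame W w N"
    and "oblique_dual_frame W V w v N"
  shows "(\<Sum>i=1..N. (cmod (cinner (w i) (v i)))\<^sup>2) \<ge> (real (vec.dim W))\<^sup>2 / real N
    \<and> ((\<Sum>i=1..N. (cmod (cinner (w i) (v i)))\<^sup>2) = (real (vec.dim W))\<^sup>2 / real N
         \<longleftrightarrow> (\<forall>i\<in>{1..N}. cinner (w i) (v i) = complex_of_real (real (vec.dim W) / real N)))"
proof -
  have wW: "\<And>i. i \<in> {1..N} \<Longrightarrow> w i \<in> W" using assms(4) unfolding is_frame_def by blast
  have proj: "\<And>f. oblique_proj W (orth_compl V) f = (\<Sum>i=1..N. cinner f (v i) *s w i)"
    using assms(5) unfolding oblique_dual_frame_def by blast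
  have id: "(\<Sum>i=1..N. cinner x (v i) *s w i) = x" if xW: "x \<in> W" for x
  proof -
    have "(THE y. y \<in> W \<and> x - y \<in> orth_compl V) = x"
    proof (rule the_equality)
      show "x \<in> W \<and> x - x \<in> orth_compl V" using xW by (simp add: orth_compl_def cinner_def)
      fix y assume y: "y \<in> W \<and> x - y \<in> orth_compl V"
      then have "x - y \<in> W" using xW assms(1) vec.subspace_diff by blast
      with y have "x - y \<in> W \<inter> orth_compl V" by blast
      then show "y = x" using assms(3) unfolding direct_sum_UNIV_def by auto
    qed
    then show ?thesis using proj[of x] unfolding oblique_proj_def by simp
  qed
  define z where "z i = cinner (w i) (v i)" for i
  define d where "d = real (vec.dim W)"
  have S: "(\<Sum>i=1..N. z i) = complex_of_real d"
    unfolding z_def d_def using trace_eq[OF assms(1) wW id] by simp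
  show ?thesis
  proof (cases "N = 0")
    case True then show ?thesis by simp
  next
    case False
    define c where "c = d / real N"
    have key: "(\<Sum>i=1..N. (cmod (z i - complex_of_real c))\<^sup>2) = (\<Sum>i=1..N. (cmod (z i))\<^sup>2) - d\<^sup>2 / real N"
    proof -
      have "(\<Sum>i=1..N. (cmod (z i - complex_of_real c))\<^sup>2)
          = (\<Sum>i=1..N. (cmod (z i))\<^sup>2) - 2 * c * Re (\<Sum>i=1..N. z i) + real N * c\<^sup>2"
        by (simp add: cmod_diff_real_sq sum.distrib sum_subtractf sum_distrib_left)
      also have "\<dots> = (\<Sum>i=1..N. (cmod (z i))\<^sup>2) - d\<^sup>2 / real N"
      proof -
        have "Re (\<Sum>i=1..N. z i) = d" using S by simp
        then show ?thesis using False by (intro final_alg) (simp_all add: c_def)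
      qed
      finally show ?thesis .
    qed
    have nn: "0 \<le> (\<Sum>i=1..N. (cmod (z i - complex_of_real c))\<^sup>2)" by (intro sum_nonneg) simp
    have "(\<Sum>i=1..N. (cmod (z i))\<^sup>2) = d\<^sup>2 / real N \<longleftrightarrow> (\<Sum>i=1..N. (cmod (z i - complex_of_real c))\<^sup>2) = 0"
      using key by linarith
    also have "\<dots> \<longleftrightarrow> (\<forall>i\<in>{1..N}. z i = complex_of_real c)"
      by (subst sum_nonneg_eq_0_iff) auto
    finally show ?thesis using key nn unfolding z_def c_def d_def by linarith
  qed
qed

end
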